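(* Let $D$ be a strongly connected digraph with $n$ vertices and exactly three complementarity eigenvalues. If $D$ contains a subdigraph isomorphic to the $\infty$-digraph $\infty(r,s)$, then $n=r+s-1$.
   Context: All digraphs are finite, without loops and without multiple arcs. For a digraph $D$ with adjacency matrix $A$ (on $n$ vertices), a real $\lambda$ is a complementarity eigenvalue if there is a nonzero $x\in\mathbb{R}^n$, $x\ge0$, with $Ax-\lambda x\ge 0$ and $\langle x,Ax-\lambda x\rangle=0$. Subdigraphs need not be induced. For $r,s\ge 2$, $\infty(r,s)$ is the digraph obtained from a directed cycle $\vec C_r$ and a directed cycle $\vec C_s$ by identifying one vertex of the first with one vertex of the second (so the two cycles share exactly one vertex). *)

theory Defs
  imports Main Complex_Main
begin

text \<open>A digraph on the vertex set {0..<n} is given by its arc relation A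
  (no loops; multiple arcs are impossible in a relation).\<close>
definition digraph :: "nat \<Rightarrow> (nat \<Rightarrow> nat \<Rightarrow> bool) \<Rightarrow> bool" where
  "digraph n A \<longleftrightarrow> (\<forall>u v. A u v \<longrightarrow> u < n \<and> v < n \<and> u \<noteq> v)"

definition adj :: "(nat \<Rightarrow> nat \<Rightarrow> bool) \<Rightarrow> nat \<Rightarrow> nat \<Rightarrow> real" where
  "adj A i j = (if A i j then 1 else 0)"

definition comp_eigenvalue :: "nat \<Rightarrow> (nat \<Rightarrow> nat \<Rightarrow> bool) \<Rightarrow> real \<Rightarrow> bool" where
  "comp_eigenvalue n A lam \<longleftrightarrow>
     (\<exists>x :: nat \<Rightarrow> real.
        (\<exists>i<n. x i \<noteq> 0) \<and> (\<forall>i<n. x i \<ge> 0) \<and>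
        (\<forall>i<n. (\<Sum>j<n. adj A i j * x j) - lam * x i \<ge> 0) \<and>
        (\<Sum>i<n. x i * ((\<Sum>j<n. adj A i j * x j) - lam * x i)) = 0)"

definition strongly_connected :: "nat \<Rightarrow> (nat \<Rightarrow> nat \<Rightarrow> bool) \<Rightarrow> bool" where
  "strongly_connected n A \<longleftrightarrow> (\<forall>u<n. \<forall>v<n. A\<^sup>*\<^sup>* u v)"

text \<open>The infinity digraph \<infinity>(r,s) on vertices {0..<r+s-1}: cycle 0\<rightarrow>1\<rightarrow>...\<rightarrow>r-1\<rightarrow>0
  and cycle 0\<rightarrow>r\<rightarrow>r+1\<rightarrow>...\<rightarrow>r+s-2\<rightarrow>0, sharing only vertex 0.\<close>
definition inf_vert2 :: "nat \<Rightarrow> nat \<Rightarrow> nat" where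
  "inf_vert2 r i = (if i = 0 then 0 else r + i - 1)"

definition inf_arc :: "nat \<Rightarrow> nat \<Rightarrow> nat \<Rightarrow> nat \<Rightarrow> bool" where
  "inf_arc r s u v \<longleftrightarrow>
     (\<exists>i<r. u = i \<and> v = (i + 1) mod r) \<or>
     (\<exists>i<s. u = inf_vert2 r i \<and> v = inf_vert2 r ((i + 1) mod s))"

text \<open>D contains a (not necessarily induced) subdigraph isomorphic to \<infinity>(r,s).\<close>
definition contains_infinity :: "nat \<Rightarrow> (nat \<Rightarrow> nat \<Rightarrow> bool) \<Rightarrow> nat \<Rightarrow> nat \<Rightarrow> bool" where
  "contains_infinity n A r s \<longleftrightarrow>
     (\<exists>f. inj_on f {0..<r+s-1} \<and> f ` {0..<r+s-1} \<subseteq> {0..<n} \<and>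
          (\<forall>u<r+s-1. \<forall>v<r+s-1. inf_arc r s u v \<longrightarrow> A (f u) (f v)))"

end

theory Submission
  imports Defs "HOL-Analysis.Analysis"
begin

definition mv :: "(nat \<Rightarrow> nat \<Rightarrow> bool) \<Rightarrow> nat \<Rightarrow> (nat \<Rightarrow> real) \<Rightarrow> nat \<Rightarrow> real" where
  "mv A n x i = (\<Sum>j<n. adj A i j * x j)"

definition eigT :: "nat \<Rightarrow> (nat \<Rightarrow> nat \<Rightarrow> bool) \<Rightarrow> nat set \<Rightarrow> real \<Rightarrow> (nat \<Rightarrow> real) \<Rightarrow> bool" where
  "eigT n A T lam x \<longleftrightarrow> (\<forall>i<n. x i \<ge> 0) \<and> (\<forall>i<n. i \<notin> T \<longrightarrow> x i = 0) \<and> (\<exists>i\<in>T. x i \<noteq> 0)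
     \<and> (\<forall>i\<in>T. mv A n x i = lam * x i)"

definition subT :: "nat \<Rightarrow> (nat \<Rightarrow> nat \<Rightarrow> bool) \<Rightarrow> nat set \<Rightarrow> real \<Rightarrow> (nat \<Rightarrow> real) \<Rightarrow> bool" where
  "subT n A T lam x \<longleftrightarrow> (\<forall>i<n. x i \<ge> 0) \<and> (\<forall>i<n. i \<notin> T \<longrightarrow> x i = 0) \<and> (\<exists>i\<in>T. x i \<noteq> 0)
     \<and> (\<forall>i\<in>T. mv A n x i \<ge> lam * x i)"

definition scT :: "(nat \<Rightarrow> nat \<Rightarrow> bool) \<Rightarrow> nat set \<Rightarrow> bool" where
  "scT A T \<longleftrightarrow> (\<forall>u\<in>T. \<forall>v\<in>T. (\<lambda>a b. A a b \<and> a \<in> T \<and> b \<in> T)\<^sup>*\<^sup>* u v)"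

lemma adj_nonneg: "adj A i j \<ge> 0" by (simp add: adj_def)

lemma mv_nonneg: "(\<And>j. j < n \<Longrightarrow> x j \<ge> 0) \<Longrightarrow> mv A n x i \<ge> 0"
  unfolding mv_def by (intro sum_nonneg) (simp add: adj_nonneg)

lemma mv_ge_term: assumes "\<And>j. j < n \<Longrightarrow> x j \<ge> 0" "b < n" "A a b"
  shows "mv A n x a \<ge> x b"
proof -
  have "adj A a b * x b \<le> mv A n x a"
    unfolding mv_def using assms
    by (intro member_le_sum) (auto simp: adj_nonneg)
  then show ?thesis using assms by (simp add: adj_def)
qed

lemma mv_lin: "mv A n (\<lambda>j. x j - t * y j) a = mv A n x a - t * mv A n y a"
  unfolding mv_def by (simp add: sum_subtractf sum_distrib_left algebra_simps)

lemma mv_scale: "mv A n (\<lambda>j. c * x j) a = c * mv A n x a"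
  unfolding mv_def by (simp add: sum_distrib_left algebra_simps)

lemma mv_add_delta: "b < n \<Longrightarrow> mv A n (\<lambda>j. x j + (if j = b then e else 0)) a = mv A n x a + adj A a b * e"
proof -
  assume b: "b < n"
  have "mv A n (\<lambda>j. x j + (if j = b then e else 0)) a = mv A n x a + (\<Sum>j<n. adj A a j * (if j = b then e else 0))"
    unfolding mv_def by (simp add: distrib_left sum.distrib)
  also have "(\<Sum>j<n. adj A a j * (if j = b then e else 0)) = (\<Sum>j<n. if j = b then adj A a b * e else 0)"
    by (rule sum.cong) auto
  also have "\<dots> = adj A a b * e" using b by (simp add: sum.delta)
  finally show ?thesis .
qed

lemma mv_delta: "b < n \<Longrightarrow> mv A n (\<lambda>j. if j = b then 1 else 0) a = adj A a b"
  unfolding mv_def by (simp add: if_distrib sum.delta cong: if_cong)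

lemma eig_comp:
  assumes "T \<subseteq> {..<n}" "eigT n A T lam x"
  shows "comp_eigenvalue n A lam"
  unfolding comp_eigenvalue_def
proof (intro exI[of _ x] conjI)
  show "\<exists>i<n. x i \<noteq> 0" using assms unfolding eigT_def by blast
  show "\<forall>i<n. 0 \<le> x i" using assms unfolding eigT_def by blast
  have d: "x i * ((\<Sum>j<n. adj A i j * x j) - lam * x i) = 0 \<and> (\<Sum>j<n. adj A i j * x j) - lam * x i \<ge> 0"
    if "i < n" for i
  proof (cases "i \<in> T")
    case True then show ?thesis using assms unfolding eigT_def mv_def by auto
  next
    case False
    then have "x i = 0" using assms that unfolding eigT_def by blast
    moreover have "mv A n x i \<ge> 0" using assms by (intro mv_nonneg) (auto simp: eigT_def)
    ultimately show ?thesis unfolding mv_def by simp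
  qed
  show "\<forall>i<n. 0 \<le> (\<Sum>j<n. adj A i j * x j) - lam * x i" using d by blast
  show "(\<Sum>i<n. x i * ((\<Sum>j<n. adj A i j * x j) - lam * x i)) = 0"
    using d by (intro sum.neutral) auto
qed

lemma crossing:
  assumes "R\<^sup>*\<^sup>* u v" "u \<notin> S" "v \<in> S"
  shows "\<exists>a b. R a b \<and> a \<notin> S \<and> b \<in> S"
  using assms
proof (induction rule: rtranclp_induct)
  case base then show ?case by simp
next
  case (step y z)
  then show ?case by (cases "y \<in> S") auto
qed

lemma eig_pos:
  assumes "scT A T" "T \<subseteq> {..<n}" "eigT n A T lam x" "u \<in> T"
  shows "x u > 0"
proof (rule ccontr)
  assume nu: "\<not> x u > 0"
  have nn: "\<And>j. j < n \<Longrightarrow> x j \<ge> 0" using assms unfolding eigT_def by blast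
  obtain v where v: "v \<in> T" "x v \<noteq> 0" using assms unfolding eigT_def by blast
  have "u < n" using assms by auto
  with nu nn have "x u = 0" by force
  have "(\<lambda>a b. A a b \<and> a \<in> T \<and> b \<in> T)\<^sup>*\<^sup>* u v" using assms v unfolding scT_def by blast
  from crossing[OF this, of "{i. x i \<noteq> 0}"] \<open>x u = 0\<close> v
  obtain a b where ab: "A a b" "a \<in> T" "b \<in> T" "x a = 0" "x b \<noteq> 0" by auto
  have "b < n" using ab assms by auto
  have "x b > 0" using nn[OF \<open>b < n\<close>] ab by simp
  moreover have "mv A n x a \<ge> x b" using mv_ge_term[of n x b A a] nn \<open>b < n\<close> ab(1) by blast
  moreover have "mv A n x a = 0" using assms ab unfolding eigT_def by simp
  ultimately show False by simp
qed


lemma compare: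
  assumes sc: "scT A T" and Tn: "T \<subseteq> {..<n}" and ex: "eigT n A T lam x"
    and ST: "S \<subseteq> T" "S \<noteq> T" and ey: "eigT n A S mu y"
  shows "mu < lam"
proof (rule ccontr)
  assume "\<not> mu < lam"
  hence le: "lam \<le> mu" by simp
  have xpos: "\<And>i. i \<in> T \<Longrightarrow> x i > 0" using eig_pos[OF sc Tn ex] by blast
  have xnn: "\<And>i. i < n \<Longrightarrow> x i \<ge> 0" using ex unfolding eigT_def by blast
  have ynn: "\<And>i. i < n \<Longrightarrow> y i \<ge> 0" using ey unfolding eigT_def by blast
  have y0: "\<And>i. i < n \<Longrightarrow> i \<notin> S \<Longrightarrow> y i = 0" using ey unfolding eigT_def by blast
  define P where "P = {i\<in>S. y i \<noteq> 0}"
  have finP: "finite P" proof (rule finite_subset)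
    show "P \<subseteq> {..<n}" using Tn ST unfolding P_def by auto
  qed simp
  have Pne: "P \<noteq> {}" using ey unfolding P_def eigT_def by blast
  have Pn: "\<And>i. i \<in> P \<Longrightarrow> i < n" using Tn ST unfolding P_def by auto
  have ypos: "\<And>i. i \<in> P \<Longrightarrow> y i > 0" using ynn Pn unfolding P_def by (metis (mono_tags, lifting) less_eq_real_def mem_Collect_eq)
  define t where "t = Min ((\<lambda>i. x i / y i) ` P)"
  have "t \<in> (\<lambda>i. x i / y i) ` P" using Min_in[of "(\<lambda>i. x i / y i) ` P"] finP Pne unfolding t_def by auto
  then obtain k where k: "k \<in> P" "t = x k / y k" by auto
  have tle: "\<And>i. i \<in> P \<Longrightarrow> t \<le> x i / y i" unfolding t_def using finP by auto
  have kT: "k \<in> T" using k ST unfolding P_def by auto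
  have tpos: "t > 0" using k xpos[OF kT] ypos[OF k(1)] by simp
  define z where "z = (\<lambda>j. x j - t * y j)"
  have znn: "z i \<ge> 0" if "i < n" for i
  proof (cases "i \<in> P")
    case True
    then have "t * y i \<le> x i" using tle[OF True] ypos[OF True] by (simp add: pos_le_divide_eq)
    then show ?thesis unfolding z_def by simp
  next
    case False
    then have "y i = 0" using y0[OF that] unfolding P_def by auto
    then show ?thesis unfolding z_def using xnn[OF that] by simp
  qed
  have zk: "z k = 0" unfolding z_def using k ypos[OF k(1)] by simp
  define Z where "Z = {i\<in>T. z i = 0}"
  have closed: "b \<in> Z" if "a \<in> Z" "A a b" "b \<in> T" for a b
  proof -
    have aT: "a \<in> T" and za: "z a = 0" using that unfolding Z_def by auto
    have an: "a < n" and bn: "b < n" using aT that Tn by auto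
    have xa: "x a = t * y a" using za unfolding z_def by simp
    have "y a \<noteq> 0" using xa xpos[OF aT] by auto
    hence aS: "a \<in> S" using y0[OF an] by blast
    have "mv A n z a = mv A n x a - t * mv A n y a" unfolding z_def by (rule mv_lin)
    also have "\<dots> = lam * x a - t * (mu * y a)" using ex ey aT aS unfolding eigT_def by simp
    also have "\<dots> = t * y a * (lam - mu)" using xa by (simp add: algebra_simps)
    also have "\<dots> \<le> 0" using tpos ynn[OF an] le by (simp add: mult_nonneg_nonpos)
    finally have "mv A n z a \<le> 0" .
    moreover have "mv A n z a \<ge> z b" using mv_ge_term[of n z b A a] znn bn that(2) by blast
    ultimately have "z b = 0" using znn[OF bn] by simp
    then show ?thesis using that unfolding Z_def by simp
  qed
  have TZ: "v \<in> Z" if "v \<in> T" for v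
  proof (rule ccontr)
    assume "v \<notin> Z"
    have "(\<lambda>a b. A a b \<and> a \<in> T \<and> b \<in> T)\<^sup>*\<^sup>* k v" using sc kT that unfolding scT_def by blast
    from crossing[OF this, of "- Z"] \<open>v \<notin> Z\<close> zk kT
    obtain a b where "A a b" "a \<in> T" "b \<in> T" "a \<in> Z" "b \<notin> Z" unfolding Z_def by auto
    then show False using closed by blast
  qed
  have "T \<subseteq> S"
  proof
    fix v assume vT: "v \<in> T"
    have "z v = 0" using TZ[OF vT] unfolding Z_def by simp
    hence "x v = t * y v" unfolding z_def by simp
    hence "y v \<noteq> 0" using xpos[OF vT] by auto
    then show "v \<in> S" using y0 vT Tn by blast
  qed
  then show False using ST by blast
qed

lemma sub_bound:
  assumes Tn: "T \<subseteq> {..<n}" and s: "subT n A T mu x"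
  shows "mu \<le> real n"
proof -
  have finT: "finite T" using Tn finite_subset by blast
  have Tne: "T \<noteq> {}" using s unfolding subT_def by blast
  define M where "M = Max (x ` T)"
  have "M \<in> x ` T" using Max_in[of "x ` T"] finT Tne unfolding M_def by auto
  then obtain i where i: "i \<in> T" "x i = M" by auto
  have xnn: "\<And>j. j < n \<Longrightarrow> x j \<ge> 0" using s unfolding subT_def by blast
  have x0: "\<And>j. j < n \<Longrightarrow> j \<notin> T \<Longrightarrow> x j = 0" using s unfolding subT_def by blast
  have xle: "x j \<le> M" if "j < n" for j
  proof (cases "j \<in> T")
    case True then show ?thesis unfolding M_def using finT by auto
  next
    case False then have "x j = 0" using x0 that by blast
    moreover have "M \<ge> 0" using i xnn Tn by auto
    ultimately show ?thesis by simp
  qed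
  obtain j where j: "j \<in> T" "x j \<noteq> 0" using s unfolding subT_def by blast
  have "x j > 0" using xnn[of j] j Tn by force
  moreover have "x j \<le> M" using xle j Tn by auto
  ultimately have Mpos: "M > 0" by simp
  have "mu * M \<le> mv A n x i" using s i unfolding subT_def by auto
  also have "\<dots> \<le> (\<Sum>j<n. M)" unfolding mv_def
  proof (rule sum_mono)
    fix j assume "j \<in> {..<n}"
    then have "j < n" by simp
    then show "adj A i j * x j \<le> M" using xle[of j] xnn[of j] Mpos by (auto simp: adj_def)
  qed
  also have "\<dots> = real n * M" by simp
  finally show ?thesis using Mpos by simp
qed

lemma growth_aux:
  assumes Tn: "T \<subseteq> {..<n}" and sc: "scT A T" and dg: "digraph n A"
  shows "\<forall>x. subT n A T mu x \<and> (\<exists>k\<in>T. mv A n x k > mu * x k) \<and> card {i\<in>T. \<not> mv A n x i > mu * x i} = N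
     \<longrightarrow> (\<exists>y. subT n A T mu y \<and> (\<forall>i\<in>T. mv A n y i > mu * y i))"
proof (induction N rule: less_induct)
  case (less N)
  show ?case
  proof (intro allI impI)
    fix x assume H: "subT n A T mu x \<and> (\<exists>k\<in>T. mv A n x k > mu * x k) \<and> card {i\<in>T. \<not> mv A n x i > mu * x i} = N"
    have finT: "finite T" using Tn finite_subset by blast
    show "\<exists>y. subT n A T mu y \<and> (\<forall>i\<in>T. mv A n y i > mu * y i)"
    proof (cases "\<forall>i\<in>T. mv A n x i > mu * x i")
      case True then show ?thesis using H by blast
    next
      case False
      then obtain u where u: "u \<in> T" "\<not> mv A n x u > mu * x u" by blast
      obtain k where k: "k \<in> T" "mv A n x k > mu * x k" using H by blast
      have "(\<lambda>a b. A a b \<and> a \<in> T \<and> b \<in> T)\<^sup>*\<^sup>* u k" using sc u k unfolding scT_def by blast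
      from crossing[OF this, of "{i. mv A n x i > mu * x i}"] u k
      obtain a b where ab: "A a b" "a \<in> T" "b \<in> T" "\<not> mv A n x a > mu * x a" "mv A n x b > mu * x b" by auto
      have an: "a < n" and bn: "b < n" using ab Tn by auto
      have anb: "a \<noteq> b" using ab by auto
      have nl: "\<not> A b b" using dg unfolding digraph_def by blast
      define e where "e = (mv A n x b - mu * x b) / (\<bar>mu\<bar> + 1)"
      have epos: "e > 0" unfolding e_def using ab(5) by (simp add: abs_add_one_gt_zero)
      have emu: "mu * e < mv A n x b - mu * x b"
      proof -
        have "mu * e \<le> \<bar>mu\<bar> * e" using epos by (simp add: mult_right_mono)
        also have "\<dots> < (\<bar>mu\<bar> + 1) * e" using epos by simp
        also have "\<dots> = mv A n x b - mu * x b" unfolding e_def by (simp add: abs_add_one_gt_zero[THEN less_imp_neq, symmetric])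
        finally show ?thesis .
      qed
      define y where "y = (\<lambda>j. x j + (if j = b then e else 0))"
      have mvy: "mv A n y i = mv A n x i + adj A i b * e" for i unfolding y_def using mv_add_delta[OF bn] by simp
      have sx: "\<forall>i\<in>T. mv A n x i \<ge> mu * x i" using H unfolding subT_def by blast
      have ge: "mv A n y i \<ge> mv A n x i" for i using mvy[of i] epos by (simp add: adj_def)
      have yb: "mv A n y b > mu * y b" using mvy[of b] nl emu unfolding y_def by (simp add: adj_def algebra_simps)
      have ya: "mv A n y a > mu * y a"
      proof -
        have "mu * x a \<le> mv A n x a" using sx ab(2) by blast
        moreover have "mv A n y a = mv A n x a + e" using mvy[of a] ab(1) by (simp add: adj_def)
        moreover have "y a = x a" using anb unfolding y_def by simp
        ultimately show ?thesis using epos by simp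
      qed
      have sy: "subT n A T mu y"
        unfolding subT_def
      proof (intro conjI)
        show "\<forall>i<n. 0 \<le> y i" using H epos unfolding subT_def y_def by auto
        show "\<forall>i<n. i \<notin> T \<longrightarrow> y i = 0" using H ab(3) unfolding subT_def y_def by auto
        show "\<exists>i\<in>T. y i \<noteq> 0"
        proof (rule bexI[of _ b])
          have "x b \<ge> 0" using H bn unfolding subT_def by blast
          then show "y b \<noteq> 0" using epos unfolding y_def by simp
        qed (rule ab(3))
        show "\<forall>i\<in>T. mu * y i \<le> mv A n y i"
        proof
          fix i assume iT: "i \<in> T"
          show "mu * y i \<le> mv A n y i"
          proof (cases "i = b")
            case True then show ?thesis using yb by simp
          next
            case False
            then have "y i = x i" unfolding y_def by simp
            moreover have "mu * x i \<le> mv A n x i" using sx iT by blast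
            ultimately show ?thesis using ge[of i] by simp
          qed
        qed
      qed
      have sub: "{i\<in>T. \<not> mv A n y i > mu * y i} \<subset> {i\<in>T. \<not> mv A n x i > mu * x i}"
      proof
        show "{i\<in>T. \<not> mv A n y i > mu * y i} \<subseteq> {i\<in>T. \<not> mv A n x i > mu * x i}"
        proof clarify
          fix i assume "i \<in> T" "\<not> mv A n y i > mu * y i" "mv A n x i > mu * x i"
          moreover have "i \<noteq> b" using yb calculation by blast
          then have "y i = x i" unfolding y_def by simp
          ultimately show False using ge[of i] by simp
        qed
        show "{i\<in>T. \<not> mv A n y i > mu * y i} \<noteq> {i\<in>T. \<not> mv A n x i > mu * x i}"
          using ab ya by blast
      qed
      have "card {i\<in>T. \<not> mv A n y i > mu * y i} < N"
        using psubset_card_mono[OF _ sub] finT H by auto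
      moreover have "\<exists>k\<in>T. mv A n y k > mu * y k" using yb ab(3) by blast
      ultimately show ?thesis using less.IH sy by blast
    qed
  qed
qed

lemma growth:
  assumes "T \<subseteq> {..<n}" "scT A T" "digraph n A" "subT n A T mu x" "k \<in> T" "mv A n x k > mu * x k"
  shows "\<exists>y. subT n A T mu y \<and> (\<forall>i\<in>T. mv A n y i > mu * y i)"
  using growth_aux[OF assms(1-3), of mu "card {i\<in>T. \<not> mv A n x i > mu * x i}"] assms(4-6) by blast


lemma bolzano_fin:
  fixes X :: "nat \<Rightarrow> nat \<Rightarrow> real"
  assumes "finite I" "\<And>m i. i \<in> I \<Longrightarrow> \<bar>X m i\<bar> \<le> C"
  shows "\<exists>r. strict_mono r \<and> (\<forall>i\<in>I. \<exists>l. (\<lambda>m. X (r m) i) \<longlonglongrightarrow> l)"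
  using assms
proof (induction I rule: finite_induct)
  case empty
  show ?case by (intro exI[of _ id]) (simp add: strict_mono_def)
next
  case (insert i F)
  then obtain r1 where r1: "strict_mono r1" "\<forall>j\<in>F. \<exists>l. (\<lambda>m. X (r1 m) j) \<longlonglongrightarrow> l" by auto
  have "bounded (range (\<lambda>m. X (r1 m) i))"
    using insert.prems by (intro boundedI[of _ C]) auto
  from bounded_imp_convergent_subsequence[OF this]
  obtain l r2 where r2: "strict_mono r2" "((\<lambda>m. X (r1 m) i) \<circ> r2) \<longlonglongrightarrow> l" by blast
  show ?case
  proof (intro exI[of _ "r1 \<circ> r2"] conjI ballI)
    show "strict_mono (r1 \<circ> r2)" using r1(1) r2(1) by (rule strict_mono_o)
    fix j assume "j \<in> insert i F"
    then show "\<exists>l. (\<lambda>m. X ((r1 \<circ> r2) m) j) \<longlonglongrightarrow> l"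
    proof
      assume "j = i" then show ?thesis using r2(2) by (auto simp: o_def)
    next
      assume "j \<in> F"
      then obtain l' where "(\<lambda>m. X (r1 m) j) \<longlonglongrightarrow> l'" using r1 by blast
      from LIMSEQ_subseq_LIMSEQ[OF this r2(1)] show ?thesis by (auto simp: o_def)
    qed
  qed
qed

lemma subT_scale:
  assumes "subT n A T mu x" "c > 0"
  shows "subT n A T mu (\<lambda>j. c * x j)"
  using assms unfolding subT_def
  by (auto simp: mv_scale)

lemma perron:
  assumes dg: "digraph n A" and sc: "scT A T" and Tn: "T \<subseteq> {..<n}" and Tne: "T \<noteq> {}"
  shows "\<exists>lam x. eigT n A T lam x"
proof -
  have finT: "finite T" using Tn finite_subset by blast
  define M where "M = {mu. \<exists>x. subT n A T mu x}"
  have bdd: "bdd_above M" unfolding M_def using sub_bound[OF Tn] by (intro bdd_aboveI[of _ "real n"]) blast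
  have "subT n A T 0 (\<lambda>i. if i \<in> T then 1 else 0)"
    unfolding subT_def using Tne by (auto intro!: mv_nonneg)
  hence Mne: "M \<noteq> {}" unfolding M_def by blast
  define rho where "rho = Sup M"
  have "\<forall>m. \<exists>mu x. subT n A T mu x \<and> (\<Sum>j<n. x j) = 1 \<and> rho - 1 / real (Suc m) < mu"
  proof
    fix m
    have "rho - 1 / real (Suc m) < rho" by simp
    then obtain mu where mu: "mu \<in> M" "rho - 1 / real (Suc m) < mu"
      using less_cSup_iff[OF Mne bdd] unfolding rho_def by blast
    then obtain x where x: "subT n A T mu x" unfolding M_def by blast
    have xnn: "\<And>j. j < n \<Longrightarrow> x j \<ge> 0" using x unfolding subT_def by blast
    obtain j where j: "j \<in> T" "x j \<noteq> 0" using x unfolding subT_def by blast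
    have "x j \<le> (\<Sum>j<n. x j)" using j Tn xnn by (intro member_le_sum) auto
    moreover have "x j > 0" using j Tn xnn[of j] by force
    ultimately have spos: "(\<Sum>j<n. x j) > 0" by simp
    define c where "c = 1 / (\<Sum>j<n. x j)"
    have "c > 0" unfolding c_def using spos by simp
    have "subT n A T mu (\<lambda>j. c * x j)" by (rule subT_scale[OF x \<open>c > 0\<close>])
    moreover have "(\<Sum>i<n. c * x i) = 1" unfolding c_def using spos by (simp add: sum_divide_distrib[symmetric])
    ultimately show "\<exists>mu x. subT n A T mu x \<and> (\<Sum>j<n. x j) = 1 \<and> rho - 1 / real (Suc m) < mu"
      using mu by blast
  qed
  then obtain MU X where MX: "\<And>m. subT n A T (MU m) (X m)" "\<And>m. (\<Sum>j<n. X m j) = 1"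
    "\<And>m. rho - 1 / real (Suc m) < MU m"
    by metis
  have MUle: "MU m \<le> rho" for m
    unfolding rho_def using MX(1)[of m] bdd by (intro cSup_upper) (auto simp: M_def)
  have Xnn: "X m j \<ge> 0" if "j < n" for m j using MX(1)[of m] that unfolding subT_def by blast
  have Xle: "X m j \<le> 1" if "j < n" for m j
  proof -
    have "X m j \<le> (\<Sum>j<n. X m j)" using that Xnn by (intro member_le_sum) auto
    then show ?thesis using MX(2) by simp
  qed
  have "\<exists>r. strict_mono r \<and> (\<forall>i\<in>{..<n}. \<exists>l. (\<lambda>m. X (r m) i) \<longlonglongrightarrow> l)"
    by (rule bolzano_fin[of "{..<n}" X 1]) (use Xnn Xle in auto)
  then obtain r where r: "strict_mono r" "\<And>i. i < n \<Longrightarrow> \<exists>l. (\<lambda>m. X (r m) i) \<longlonglongrightarrow> l" by auto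
  define x where "x = (\<lambda>i. lim (\<lambda>m. X (r m) i))"
  have xlim: "(\<lambda>m. X (r m) i) \<longlonglongrightarrow> x i" if "i < n" for i
    unfolding x_def using r(2)[OF that] convergent_LIMSEQ_iff convergent_def by blast
  have MUlim: "MU \<longlonglongrightarrow> rho"
  proof (rule tendsto_sandwich[of "\<lambda>m. rho - 1 / real (Suc m)" MU sequentially "\<lambda>m. rho"])
    show "\<forall>\<^sub>F m in sequentially. rho - 1 / real (Suc m) \<le> MU m" using MX(3) by (intro always_eventually allI less_imp_le) blast
    show "\<forall>\<^sub>F m in sequentially. MU m \<le> rho" using MUle by (intro always_eventually allI) blast
    have "(\<lambda>m. 1 / real (Suc m)) \<longlonglongrightarrow> 0" using LIMSEQ_inverse_real_of_nat by (simp add: inverse_eq_divide)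
    then show "(\<lambda>m. rho - 1 / real (Suc m)) \<longlonglongrightarrow> rho" using tendsto_diff[OF tendsto_const, of _ 0 sequentially rho] by simp
  qed simp
  have MUr: "(\<lambda>m. MU (r m)) \<longlonglongrightarrow> rho" using LIMSEQ_subseq_LIMSEQ[OF MUlim r(1)] by (simp add: o_def)
  have xnn: "x i \<ge> 0" if "i < n" for i
    using xlim[OF that] Xnn[OF that] by (intro LIMSEQ_le_const[of _ _ 0]) auto
  have x0: "x i = 0" if "i < n" "i \<notin> T" for i
  proof -
    have "\<And>m. X (r m) i = 0" using MX(1) that unfolding subT_def by blast
    then show ?thesis using xlim[OF that(1)] LIMSEQ_unique[OF _ tendsto_const] by auto
  qed
  have "(\<lambda>m. \<Sum>j<n. X (r m) j) \<longlonglongrightarrow> (\<Sum>j<n. x j)" using xlim by (intro tendsto_sum) auto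
  then have xs: "(\<Sum>j<n. x j) = 1" using MX(2) LIMSEQ_unique[OF _ tendsto_const] by auto
  have "\<exists>j<n. x j \<noteq> 0"
  proof (rule ccontr)
    assume "\<not> ?thesis"
    then have "(\<Sum>j<n. x j) = 0" by simp
    then show False using xs by simp
  qed
  then obtain j where j: "j < n" "x j \<noteq> 0" by blast
  have jT: "j \<in> T" using x0 j by blast
  have xsub: "mv A n x i \<ge> rho * x i" if iT: "i \<in> T" for i
  proof -
    have iN: "i < n" using iT Tn by auto
    have "(\<lambda>m. mv A n (X (r m)) i - MU (r m) * X (r m) i) \<longlonglongrightarrow> mv A n x i - rho * x i"
      unfolding mv_def
      by (intro tendsto_intros MUr xlim iN) (auto intro: xlim)
    moreover have "\<And>m. mv A n (X (r m)) i - MU (r m) * X (r m) i \<ge> 0" using MX(1) iT unfolding subT_def by auto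
    ultimately have "mv A n x i - rho * x i \<ge> 0" by (intro LIMSEQ_le_const[of _ _ 0]) auto
    then show ?thesis by simp
  qed
  have sx: "subT n A T rho x" unfolding subT_def using xnn x0 j jT xsub by blast
  have eq: "mv A n x i = rho * x i" if iT: "i \<in> T" for i
  proof (rule ccontr)
    assume "mv A n x i \<noteq> rho * x i"
    then have "mv A n x i > rho * x i" using xsub[OF iT] by simp
    from growth[OF Tn sc dg sx iT this]
    obtain y where y: "subT n A T rho y" "\<forall>i\<in>T. mv A n y i > rho * y i" by blast
    define d where "d = Min ((\<lambda>i. (mv A n y i - rho * y i) / (y i + 1)) ` T)"
    have ynn: "\<And>i. i \<in> T \<Longrightarrow> y i \<ge> 0" using y(1) Tn unfolding subT_def by auto
    have dpos: "d > 0" unfolding d_def using finT Tne y(2) ynn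
      by (subst Min_gr_iff) (auto intro!: divide_pos_pos simp: add_nonneg_pos)
    have "subT n A T (rho + d) y"
      unfolding subT_def
    proof (intro conjI)
      show "\<forall>i<n. 0 \<le> y i" "\<forall>i<n. i \<notin> T \<longrightarrow> y i = 0" "\<exists>i\<in>T. y i \<noteq> 0"
        using y(1) unfolding subT_def by blast+
      show "\<forall>i\<in>T. (rho + d) * y i \<le> mv A n y i"
      proof
        fix i assume iT: "i \<in> T"
        have "d \<le> (mv A n y i - rho * y i) / (y i + 1)" unfolding d_def using finT iT by auto
        then have "d * (y i + 1) \<le> mv A n y i - rho * y i" using ynn[OF iT] by (simp add: pos_le_divide_eq add_nonneg_pos)
        moreover have "d * y i \<le> d * (y i + 1)" using dpos by simp
        ultimately show "(rho + d) * y i \<le> mv A n y i" by (simp add: algebra_simps)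
      qed
    qed
    then have "rho + d \<in> M" unfolding M_def by blast
    then have "rho + d \<le> rho" unfolding rho_def using bdd by (rule cSup_upper)
    then show False using dpos by simp
  qed
  have "eigT n A T rho x" unfolding eigT_def using xnn x0 j jT eq by blast
  then show ?thesis by blast
qed


lemma cycle_reach:
  assumes "\<And>i. i < m \<Longrightarrow> R (g i) (g (Suc i mod m))" "i < m" "j < m"
  shows "R\<^sup>*\<^sup>* (g i) (g j)"
proof -
  have m0: "0 < m" using assms by simp
  have "R\<^sup>*\<^sup>* (g i) (g ((i + d) mod m))" for d
  proof (induction d)
    case 0 then show ?case using assms by simp
  next
    case (Suc d)
    have "R (g ((i + d) mod m)) (g (Suc ((i + d) mod m) mod m))" using assms(1) m0 by simp
    moreover have "Suc ((i + d) mod m) mod m = (i + Suc d) mod m" by (simp add: mod_Suc_eq)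
    ultimately show ?case using Suc by (metis rtranclp.rtrancl_into_rtrancl)
  qed
  from this[of "m - i + j"] show ?thesis using assms by simp
qed

lemma inf_vert2_lt: "i < s \<Longrightarrow> r \<ge> 2 \<Longrightarrow> s \<ge> 2 \<Longrightarrow> inf_vert2 r i < r + s - 1"
  unfolding inf_vert2_def by auto

theorem mainTheorem4:
  fixes n r s :: nat and A :: "nat \<Rightarrow> nat \<Rightarrow> bool"
  assumes "digraph n A"
    and "strongly_connected n A"
    and "card {lam. comp_eigenvalue n A lam} = 3"
    and "r \<ge> 2" and "s \<ge> 2"
    and "contains_infinity n A r s"
  shows "n = r + s - 1"
proof (rule ccontr)
  assume neq: "n \<noteq> r + s - 1"
  note dg = assms(1)
  obtain f where f: "inj_on f {0..<r+s-1}" "f ` {0..<r+s-1} \<subseteq> {0..<n}"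
    "\<And>u v. u < r+s-1 \<Longrightarrow> v < r+s-1 \<Longrightarrow> inf_arc r s u v \<Longrightarrow> A (f u) (f v)"
    using assms(6) unfolding contains_infinity_def by blast
  define S0 where "S0 = {f 0}"
  define S1 where "S1 = f ` {0..<r}"
  define S2 where "S2 = f ` {0..<r+s-1}"
  define S3 where "S3 = {..<n}"
  have S2n: "S2 \<subseteq> {..<n}" using f(2) unfolding S2_def by auto
  have cS2: "card S2 = r + s - 1" unfolding S2_def using card_image[OF f(1)] by simp
  have "card S2 \<le> n" using card_mono[OF _ S2n] by simp
  with neq cS2 have ltn: "r + s - 1 < n" by simp
  have S23: "S2 \<subseteq> S3" "S2 \<noteq> S3" using S2n cS2 ltn unfolding S3_def by auto
  have S12: "S1 \<subseteq> S2" unfolding S1_def S2_def using assms(5) by (auto intro!: imageI)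
  have "f r \<in> S2" unfolding S2_def using assms(5) by auto
  moreover have "f r \<notin> S1"
  proof
    assume "f r \<in> S1"
    then obtain i where i: "i < r" "f r = f i" unfolding S1_def by auto
    have "r \<in> {0..<r+s-1}" "i \<in> {0..<r+s-1}" using i assms(5) by auto
    then have "r = i" using f(1) i(2) unfolding inj_on_def by blast
    then show False using i by simp
  qed
  ultimately have S12': "S1 \<noteq> S2" by blast
  have S01: "S0 \<subseteq> S1" unfolding S0_def S1_def using assms(4) by auto
  have "f 1 \<in> S1" unfolding S1_def using assms(4) by auto
  moreover have "f 1 \<noteq> f 0" using f(1) assms(4,5) unfolding inj_on_def by fastforce
  ultimately have S01': "S0 \<noteq> S1" unfolding S0_def by blast
  have S1n: "S1 \<subseteq> {..<n}" using S12 S2n by blast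
  have f0n: "f 0 < n" using S01 S1n unfolding S0_def by auto
  have arc1: "A (f i) (f (Suc i mod r))" if "i < r" for i
  proof -
    have "inf_arc r s i (Suc i mod r)" unfolding inf_arc_def using that by auto
    moreover have "i < r + s - 1" "Suc i mod r < r + s - 1" using that assms(4,5)
      by (auto intro: less_le_trans[OF mod_less_divisor])
    ultimately show ?thesis using f(3) by blast
  qed
  have arc2: "A (f (inf_vert2 r i)) (f (inf_vert2 r (Suc i mod s)))" if "i < s" for i
  proof -
    have "inf_arc r s (inf_vert2 r i) (inf_vert2 r (Suc i mod s))" unfolding inf_arc_def using that by auto
    moreover have "inf_vert2 r i < r + s - 1" "inf_vert2 r (Suc i mod s) < r + s - 1"
      using inf_vert2_lt assms(4,5) that by auto
    ultimately show ?thesis using f(3) by blast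
  qed
  have sc1: "scT A S1" unfolding scT_def
  proof (intro ballI)
    fix u v assume "u \<in> S1" "v \<in> S1"
    then obtain i j where ij: "i < r" "j < r" "u = f i" "v = f j" unfolding S1_def by auto
    have "(\<lambda>a b. A a b \<and> a \<in> S1 \<and> b \<in> S1)\<^sup>*\<^sup>* (f i) (f j)"
      by (rule cycle_reach[where m=r and g=f]) (use arc1 ij in \<open>auto simp: S1_def\<close>)
    then show "(\<lambda>a b. A a b \<and> a \<in> S1 \<and> b \<in> S1)\<^sup>*\<^sup>* u v" using ij by simp
  qed
  let ?R2 = "\<lambda>a b. A a b \<and> a \<in> S2 \<and> b \<in> S2"
  have c1: "?R2\<^sup>*\<^sup>* (f i) (f j)" if "i < r" "j < r" for i j
  proof (rule cycle_reach[where m=r and g=f])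
    have inS2: "\<And>i. i < r \<Longrightarrow> f i \<in> S2" using S12 unfolding S1_def by auto
    fix k assume "k < r" then show "?R2 (f k) (f (Suc k mod r))" using arc1 inS2 by simp
  qed (use that in auto)
  have c2: "?R2\<^sup>*\<^sup>* (f (inf_vert2 r i)) (f (inf_vert2 r j))" if "i < s" "j < s" for i j
  proof (rule cycle_reach[where m=s and g="\<lambda>i. f (inf_vert2 r i)"])
    fix k assume k: "k < s"
    have "inf_vert2 r k < r + s - 1" "inf_vert2 r (Suc k mod s) < r + s - 1"
      using inf_vert2_lt assms(4,5) k by auto
    then show "?R2 (f (inf_vert2 r k)) (f (inf_vert2 r (Suc k mod s)))" using arc2[OF k] unfolding S2_def by auto
  qed (use that in auto)
  have hub: "?R2\<^sup>*\<^sup>* (f p) (f 0) \<and> ?R2\<^sup>*\<^sup>* (f 0) (f p)" if "p < r + s - 1" for p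
  proof (cases "p < r")
    case True
    have r0: "0 < r" using assms(4) by simp
    show ?thesis using c1[OF True r0] c1[OF r0 True] by blast
  next
    case False
    define q where "q = p - r + 1"
    have q: "q < s" "inf_vert2 r q = p" using False that unfolding q_def inf_vert2_def by auto
    have v0: "inf_vert2 r 0 = 0" unfolding inf_vert2_def by simp
    have s0: "0 < s" using assms(5) by simp
    have a1: "?R2\<^sup>*\<^sup>* (f p) (f 0)" using c2[OF q(1) s0] unfolding q(2) v0 .
    have a2: "?R2\<^sup>*\<^sup>* (f 0) (f p)" using c2[OF s0 q(1)] unfolding q(2) v0 .
    show ?thesis using a1 a2 by blast
  qed
  have sc2: "scT A S2" unfolding scT_def
  proof (intro ballI)
    fix u v assume "u \<in> S2" "v \<in> S2"
    then obtain p q where pq: "p < r + s - 1" "q < r + s - 1" "u = f p" "v = f q" unfolding S2_def by auto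
    have "?R2\<^sup>*\<^sup>* (f p) (f q)" using rtranclp_trans[OF conjunct1[OF hub[OF pq(1)]] conjunct2[OF hub[OF pq(2)]]] .
    then show "?R2\<^sup>*\<^sup>* u v" using pq by simp
  qed
  have sc3: "scT A S3" unfolding scT_def
  proof (intro ballI)
    fix u v assume "u \<in> S3" "v \<in> S3"
    then have uv: "A\<^sup>*\<^sup>* u v" using assms(2) unfolding strongly_connected_def S3_def by auto
    have le: "A \<le> (\<lambda>a b. A a b \<and> a \<in> S3 \<and> b \<in> S3)" using dg unfolding digraph_def S3_def by auto
    show "(\<lambda>a b. A a b \<and> a \<in> S3 \<and> b \<in> S3)\<^sup>*\<^sup>* u v" using predicate2D[OF rtranclp_mono[OF le] uv] .
  qed
  have nl: "\<not> A (f 0) (f 0)" using dg unfolding digraph_def by blast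
  have e0: "eigT n A S0 0 (\<lambda>j. if j = f 0 then 1 else 0)"
    unfolding eigT_def S0_def
  proof (intro conjI)
    show "\<forall>i<n. 0 \<le> (if i = f 0 then 1 else (0::real))" by simp
    show "\<forall>i<n. i \<notin> {f 0} \<longrightarrow> (if i = f 0 then 1 else (0::real)) = 0" by simp
    show "\<exists>i\<in>{f 0}. (if i = f 0 then 1 else (0::real)) \<noteq> 0" by simp
    show "\<forall>i\<in>{f 0}. mv A n (\<lambda>j. if j = f 0 then 1 else 0) i = 0 * (if i = f 0 then 1 else 0)"
      using mv_delta[OF f0n] nl by (simp add: adj_def)
  qed
  have S1ne: "S1 \<noteq> {}" using S01 unfolding S0_def by blast
  have S2ne: "S2 \<noteq> {}" using S12 S1ne by blast
  have S3ne: "S3 \<noteq> {}" using f0n unfolding S3_def by blast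
  obtain l1 x1 where e1: "eigT n A S1 l1 x1" using perron[OF dg sc1 S1n S1ne] by blast
  obtain l2 x2 where e2: "eigT n A S2 l2 x2" using perron[OF dg sc2 S2n S2ne] by blast
  obtain l3 x3 where e3: "eigT n A S3 l3 x3" using perron[OF dg sc3 _ S3ne] unfolding S3_def by blast
  have lt1: "0 < l1" by (rule compare[OF sc1 S1n e1 S01 S01' e0])
  have lt2: "l1 < l2" by (rule compare[OF sc2 S2n e2 S12 S12' e1])
  have lt3: "l2 < l3" by (rule compare[OF sc3 _ e3 S23 e2]) (simp add: S3_def)
  have S0n: "S0 \<subseteq> {..<n}" using f0n unfolding S0_def by simp
  have S3n: "S3 \<subseteq> {..<n}" unfolding S3_def by simp
  have sub: "{0, l1, l2, l3} \<subseteq> {lam. comp_eigenvalue n A lam}"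
    using eig_comp[OF S0n e0] eig_comp[OF S1n e1] eig_comp[OF S2n e2] eig_comp[OF S3n e3] by simp
  have fin: "finite {lam. comp_eigenvalue n A lam}" using assms(3) card.infinite by fastforce
  have "card {0, l1, l2, l3} = 4" using lt1 lt2 lt3 by auto
  then have "4 \<le> card {lam. comp_eigenvalue n A lam}" using card_mono[OF fin sub] by simp
  then show False using assms(3) by simp
qed

end
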